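(* Let $(x^*,u^* )$ be a local solution of problem (P) with radius $\delta>0$, for $k=1,2,\dots$ let $(x_k,u_k)$ be a global solution of $(P_k)$, let $\mu_k(t,s):=\frac{\chi_{(t-\tau,t)}(s)\exp(k\,x_k(s))}{\int_{t-\tau}^t\exp(k\,x_k(\hat s))\,\mathrm{d}\hat s}$ (componentwise), and let $\mu\in L^\infty_w(I;\mathcal{M}(I_\tau))^n$ be a weak-$\star$ limit in $(L^1(I;C(I_\tau))^n)^*$ of a subsequence of $(\mu_k)$ satisfying $\mu(t)\in\partial\max x^*_t$ for a.a. $t\in I$. Then $\mu\ge0$ and, for almost all $t\in I$ and all $i=1,\dots,n$, $\|\mu_i(t)\|_{\mathcal{M}(I_\tau)}=1$ and $\operatorname{supp}(\mu_i(t))\subset\operatorname{argmax}_{s\in[t-\tau,t]}x^*_i(s)$.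
   Context: Let $n,m\ge1$, $T>0$, $\tau>0$, $I=[0,T]$, $I_\tau=[-\tau,T]$. For $x\in C(I_\tau;\mathbb{R}^n)$, $t\in I$: $\max x_t:=\max_{s\in[t-\tau,t]}x(s)$ and $\mathrm{LIE}_k(x_t):=\frac1k\log\big(\int_{t-\tau}^t\exp(kx(s))\,\mathrm{d}s\big)$, componentwise. Standing assumptions: $F(x,v,u)=F_0(x,v)+F_1(x,v)u$ with $F_0:\mathbb{R}^n\times\mathbb{R}^n\to\mathbb{R}^n$, $F_1:\mathbb{R}^n\times\mathbb{R}^n\to\mathbb{R}^{n\times m}$ globally Lipschitz and $C^1$; $\phi\in C([-\tau,0];\mathbb{R}^n)$; $U\subset\mathbb{R}^m$ nonempty convex compact; $j:I\times\mathbb{R}^n\times\mathbb{R}^m\to\mathbb{R}$ a nonnegative normal integrand, convex in its third argument, differentiable in its second argument with $j_x$ continuous in the second and third arguments. Feasible controls: $u\in L^\infty(I;\mathbb{R}^m)$, $u(t)\in U$ a.e. Problem (P): minimize $J(x,u)=\int_0^Tj(t,x(t),u(t))\,\mathrm{d}t$ over feasible $u$, $x\in C(I_\tau;\mathbb{R}^n)\cap W^{1,\infty}(I;\mathbb{R}^n)$ solving $x'(t)=F(x(t),\max x_t,u(t))$ a.e. on $(0,T)$, $x=\phi$ on $[-\tau,0]$. Local solution with radius $\delta$: feasible $u^*$ with state $x^*$ and $J(x^*,u^* )\le J(x,u)$ for all feasible $u$ with $\|u-u^*\|_{L^2}\le\delta$. Problem $(P_k)$: minimize $\int_0^Tj(t,x(t),u(t))+\frac12|u(t)-u^*(t)|^2\,\mathrm{d}t$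 over feasible $u$ with $\|u-u^*\|_{L^2}\le\delta$, $x$ solving $x'(t)=F(x(t),\mathrm{LIE}_k(x_t),u(t))$ a.e. on $I$, $x=\phi$ on $[-\tau,0]$. $\mathcal{M}(I_\tau)$: regular signed Borel measures on $I_\tau$ with total variation norm. $L^\infty_w(I;\mathcal{M}(I_\tau))$: equivalence classes of weak-$\star$ measurable $\nu:I\to\mathcal{M}(I_\tau)$ with $|\langle\nu(t),z\rangle|\le c\|z\|_{C(I_\tau)}$ for a.a. $t$, all $z$, some $c\ge0$, identified with the dual of $L^1(I;C(I_\tau))$ via $\langle\nu,z\rangle=\int_0^T\langle\nu(t),z(t)\rangle\,\mathrm{d}t$; $\mu_k$ is identified with $t\mapsto\mu_k(t,s)\,\mathrm{d}s$. $\mu(t)\in\partial\max x^*_t$ means that for each $i$, $\mu_i(t)$ lies in the convex subdifferential of $C(I_\tau)\ni w\mapsto\max_{s\in[t-\tau,t]}w(s)$ at $x^*_i$. $\operatorname{supp}$ is the support of a measure. *)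

theory Defs
  imports "HOL-Analysis.Analysis"
begin

definition bsets :: "real set \<Rightarrow> real set set" where
  "bsets K = sets (restrict_space borel K)"

definition tv :: "real set \<Rightarrow> (real set \<Rightarrow> real) \<Rightarrow> real set \<Rightarrow> real" where
  "tv K \<nu> A = (SUP P \<in> {P. finite P \<and> P \<subseteq> bsets K \<and> disjoint P \<and> \<Union>P = A}. \<Sum>B\<in>P. \<bar>\<nu> B\<bar>)"

definition regular_sm :: "real set \<Rightarrow> (real set \<Rightarrow> real) \<Rightarrow> bool" where
  "regular_sm K \<nu> \<longleftrightarrow> (\<forall>A\<in>bsets K.
      tv K \<nu> A = (SUP C \<in> {C. compact C \<and> C \<subseteq> A}. tv K \<nu> C) \<and>
      tv K \<nu> A = (INF V \<in> {V. openin (top_of_set K) V \<and> A \<subseteq> V}. tv K \<nu> V))"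

definition signed_measure_on :: "real set \<Rightarrow> (real set \<Rightarrow> real) \<Rightarrow> bool" where
  "signed_measure_on K \<nu> \<longleftrightarrow> \<nu> {} = 0 \<and>
     (\<forall>A :: nat \<Rightarrow> real set. range A \<subseteq> bsets K \<longrightarrow> disjoint_family A \<longrightarrow>
        (\<lambda>n. \<nu> (A n)) sums \<nu> (\<Union>(range A))) \<and> regular_sm K \<nu>"

definition tvnorm :: "real set \<Rightarrow> (real set \<Rightarrow> real) \<Rightarrow> real" where
  "tvnorm K \<nu> = tv K \<nu> K"

definition sm_pos :: "real set \<Rightarrow> (real set \<Rightarrow> real) \<Rightarrow> real measure" where
  "sm_pos K \<nu> = measure_of K (bsets K) (\<lambda>A. ennreal ((tv K \<nu> A + \<nu> A) / 2))"

definition sm_neg :: "real set \<Rightarrow> (real set \<Rightarrow> real) \<Rightarrow> real measure" where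
  "sm_neg K \<nu> = measure_of K (bsets K) (\<lambda>A. ennreal ((tv K \<nu> A - \<nu> A) / 2))"

definition spair :: "real set \<Rightarrow> (real set \<Rightarrow> real) \<Rightarrow> (real \<Rightarrow> real) \<Rightarrow> real" where
  "spair K \<nu> z = (\<integral>s. z s \<partial>sm_pos K \<nu>) - (\<integral>s. z s \<partial>sm_neg K \<nu>)"

definition sm_nonneg :: "real set \<Rightarrow> (real set \<Rightarrow> real) \<Rightarrow> bool" where
  "sm_nonneg K \<nu> \<longleftrightarrow> (\<forall>A\<in>bsets K. 0 \<le> \<nu> A)"

definition supp_sm :: "real set \<Rightarrow> (real set \<Rightarrow> real) \<Rightarrow> real set" where
  "supp_sm K \<nu> = K - \<Union>{V. openin (top_of_set K) V \<and> tv K \<nu> V = 0}"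

definition supnorm :: "real set \<Rightarrow> (real \<Rightarrow> real) \<Rightarrow> real" where
  "supnorm K z = Sup ((\<lambda>s. \<bar>z s\<bar>) ` K)"

text \<open>z in L^1(I; C(I_tau)) (Bochner): values continuous on K, strongly measurable
  (a.e. sup-norm limit of simple measurable C(K)-valued functions), integrable norm.\<close>
definition L1C :: "real \<Rightarrow> real \<Rightarrow> (real \<Rightarrow> real \<Rightarrow> real) \<Rightarrow> bool" where
  "L1C \<tau> T z \<longleftrightarrow>
     (\<forall>t\<in>{0..T}. continuous_on {-\<tau>..T} (z t)) \<and>
     (\<exists>f :: nat \<Rightarrow> real \<Rightarrow> real \<Rightarrow> real.
        (\<forall>n. (\<forall>t\<in>{0..T}. continuous_on {-\<tau>..T} (f n t)) \<and>
             finite ((\<lambda>t. restrict (f n t) {-\<tau>..T}) ` {0..T}) \<and>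
             (\<forall>g. {t\<in>{0..T}. restrict (f n t) {-\<tau>..T} = g} \<in> sets (lebesgue_on {0..T}))) \<and>
        (AE t in lebesgue_on {0..T}. (\<lambda>n. supnorm {-\<tau>..T} (\<lambda>s. f n t s - z t s)) \<longlonglongrightarrow> 0)) \<and>
     (\<integral>\<^sup>+ t. ennreal (supnorm {-\<tau>..T} (z t)) \<partial>lebesgue_on {0..T}) < \<infinity>"

text \<open>nu in L^infty_w(I; M(I_tau))^n (representative).\<close>
definition Linf_w :: "real \<Rightarrow> real \<Rightarrow> (real \<Rightarrow> 'n \<Rightarrow> real set \<Rightarrow> real) \<Rightarrow> bool" where
  "Linf_w \<tau> T \<nu> \<longleftrightarrow>
     (\<forall>t\<in>{0..T}. \<forall>i. signed_measure_on {-\<tau>..T} (\<nu> t i)) \<and>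
     (\<forall>i z. continuous_on {-\<tau>..T} z \<longrightarrow>
        (\<lambda>t. spair {-\<tau>..T} (\<nu> t i) z) \<in> borel_measurable (lebesgue_on {0..T})) \<and>
     (\<exists>c\<ge>0. \<forall>i. AE t in lebesgue_on {0..T}. \<forall>z. continuous_on {-\<tau>..T} z \<longrightarrow>
        \<bar>spair {-\<tau>..T} (\<nu> t i) z\<bar> \<le> c * supnorm {-\<tau>..T} z)"

definition maxwin :: "real \<Rightarrow> (real \<Rightarrow> real^'n) \<Rightarrow> real \<Rightarrow> real^'n" where
  "maxwin \<tau> x t = (\<chi> i. Sup ((\<lambda>s. x s $ i) ` {t-\<tau>..t}))"

definition LIE :: "nat \<Rightarrow> real \<Rightarrow> (real \<Rightarrow> real^'n) \<Rightarrow> real \<Rightarrow> real^'n" where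
  "LIE k \<tau> x t = (\<chi> i. (1 / real k) * ln (integral {t-\<tau>..t} (\<lambda>s. exp (real k * x s $ i))))"

definition C1_map :: "('a::real_normed_vector \<Rightarrow> 'b::real_normed_vector) \<Rightarrow> bool" where
  "C1_map f \<longleftrightarrow> (\<exists>Df. (\<forall>p. (f has_derivative blinfun_apply (Df p)) (at p)) \<and> continuous_on UNIV Df)"

definition normal_integrand :: "real \<Rightarrow> (real \<Rightarrow> real^'n \<Rightarrow> real^'m \<Rightarrow> real) \<Rightarrow> bool" where
  "normal_integrand T j \<longleftrightarrow>
     (\<lambda>(t, x, u). j t x u) \<in> borel_measurable (lebesgue_on {0..T} \<Otimes>\<^sub>M borel) \<and>
     (\<forall>t\<in>{0..T}. \<forall>c. closed {p. j t (fst p) (snd p) \<le> c})"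

definition standing_assms ::
  "real \<Rightarrow> real \<Rightarrow> (real^'n \<Rightarrow> real^'n \<Rightarrow> real^'n) \<Rightarrow> (real^'n \<Rightarrow> real^'n \<Rightarrow> real^'m^'n)
   \<Rightarrow> (real \<Rightarrow> real^'n) \<Rightarrow> (real^'m) set \<Rightarrow> (real \<Rightarrow> real^'n \<Rightarrow> real^'m \<Rightarrow> real) \<Rightarrow> bool" where
  "standing_assms \<tau> T F0 F1 \<phi> U j \<longleftrightarrow>
     0 < T \<and> 0 < \<tau> \<and>
     (\<exists>L. L-lipschitz_on UNIV (\<lambda>(x, v). F0 x v)) \<and> C1_map (\<lambda>(x, v). F0 x v) \<and>
     (\<exists>L. L-lipschitz_on UNIV (\<lambda>(x, v). F1 x v)) \<and> C1_map (\<lambda>(x, v). F1 x v) \<and>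
     continuous_on {-\<tau>..0} \<phi> \<and>
     U \<noteq> {} \<and> convex U \<and> compact U \<and>
     (\<forall>t\<in>{0..T}. \<forall>x u. 0 \<le> j t x u) \<and> normal_integrand T j \<and>
     (\<forall>t\<in>{0..T}. \<forall>x. convex_on UNIV (j t x)) \<and>
     (\<exists>jx :: real \<Rightarrow> real^'n \<Rightarrow> real^'m \<Rightarrow> ((real^'n) \<Rightarrow>\<^sub>L real).
        (\<forall>t\<in>{0..T}. \<forall>x u. ((\<lambda>y. j t y u) has_derivative blinfun_apply (jx t x u)) (at x)) \<and>
        (\<forall>t\<in>{0..T}. continuous_on UNIV (\<lambda>(x, u). jx t x u)))"

definition feasible :: "real \<Rightarrow> (real^'m) set \<Rightarrow> (real \<Rightarrow> real^'m) \<Rightarrow> bool" where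
  "feasible T U u \<longleftrightarrow> u \<in> borel_measurable (lebesgue_on {0..T}) \<and>
     (\<exists>c. AE t in lebesgue_on {0..T}. norm (u t) \<le> c) \<and>
     (AE t in lebesgue_on {0..T}. u t \<in> U)"

text \<open>x in C(I_tau) \<inter> W^{1,\<infinity>}(I) solving x' = F(x, D x, u) a.e. on I, x = phi on [-tau,0].\<close>
definition is_state ::
  "real \<Rightarrow> real \<Rightarrow> (real^'n \<Rightarrow> real^'n \<Rightarrow> real^'n) \<Rightarrow> (real^'n \<Rightarrow> real^'n \<Rightarrow> real^'m^'n)
   \<Rightarrow> ((real \<Rightarrow> real^'n) \<Rightarrow> real \<Rightarrow> real^'n) \<Rightarrow> (real \<Rightarrow> real^'n)
   \<Rightarrow> (real \<Rightarrow> real^'m) \<Rightarrow> (real \<Rightarrow> real^'n) \<Rightarrow> bool" where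
  "is_state \<tau> T F0 F1 D \<phi> u x \<longleftrightarrow>
     continuous_on {-\<tau>..T} x \<and> (\<exists>L. L-lipschitz_on {0..T} x) \<and>
     (\<forall>s\<in>{-\<tau>..0}. x s = \<phi> s) \<and>
     (AE t in lebesgue_on {0..T}.
        (x has_vector_derivative (F0 (x t) (D x t) + F1 (x t) (D x t) *v u t)) (at t))"

definition Jcost :: "real \<Rightarrow> (real \<Rightarrow> real^'n \<Rightarrow> real^'m \<Rightarrow> real) \<Rightarrow> (real \<Rightarrow> real^'n) \<Rightarrow> (real \<Rightarrow> real^'m) \<Rightarrow> ennreal" where
  "Jcost T j x u = (\<integral>\<^sup>+ t. ennreal (j t (x t) (u t)) \<partial>lebesgue_on {0..T})"

definition L2sq :: "real \<Rightarrow> (real \<Rightarrow> real^'m) \<Rightarrow> (real \<Rightarrow> real^'m) \<Rightarrow> ennreal" where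
  "L2sq T u v = (\<integral>\<^sup>+ t. ennreal ((norm (u t - v t))\<^sup>2) \<partial>lebesgue_on {0..T})"

definition Jk :: "real \<Rightarrow> (real \<Rightarrow> real^'n \<Rightarrow> real^'m \<Rightarrow> real) \<Rightarrow> (real \<Rightarrow> real^'m) \<Rightarrow> (real \<Rightarrow> real^'n) \<Rightarrow> (real \<Rightarrow> real^'m) \<Rightarrow> ennreal" where
  "Jk T j us x u = (\<integral>\<^sup>+ t. ennreal (j t (x t) (u t) + 1/2 * (norm (u t - us t))\<^sup>2) \<partial>lebesgue_on {0..T})"

definition local_solution_P where
  "local_solution_P \<tau> T F0 F1 \<phi> U j \<delta> xs us \<longleftrightarrow>
     feasible T U us \<and> is_state \<tau> T F0 F1 (maxwin \<tau>) \<phi> us xs \<and>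
     (\<forall>x u. feasible T U u \<and> L2sq T u us \<le> ennreal (\<delta>\<^sup>2) \<and> is_state \<tau> T F0 F1 (maxwin \<tau>) \<phi> u x
        \<longrightarrow> Jcost T j xs us \<le> Jcost T j x u)"

definition global_solution_Pk where
  "global_solution_Pk k \<tau> T F0 F1 \<phi> U j \<delta> us xk uk \<longleftrightarrow>
     feasible T U uk \<and> L2sq T uk us \<le> ennreal (\<delta>\<^sup>2) \<and> is_state \<tau> T F0 F1 (LIE k \<tau>) \<phi> uk xk \<and>
     (\<forall>x u. feasible T U u \<and> L2sq T u us \<le> ennreal (\<delta>\<^sup>2) \<and> is_state \<tau> T F0 F1 (LIE k \<tau>) \<phi> u x
        \<longrightarrow> Jk T j us xk uk \<le> Jk T j us x u)"

text \<open>The measure mu_{k,i}(t) = mu_{k,i}(t,s) ds on I_tau.\<close>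
definition muk :: "real \<Rightarrow> nat \<Rightarrow> (real \<Rightarrow> real^'n) \<Rightarrow> real \<Rightarrow> 'n \<Rightarrow> real set \<Rightarrow> real" where
  "muk \<tau> k x t i A = (LINT s:A|lborel. indicator {t-\<tau><..<t} s * exp (real k * x s $ i)
       / integral {t-\<tau>..t} (\<lambda>s'. exp (real k * x s' $ i)))"

text \<open>nu in the convex subdifferential of w \<mapsto> max_{[t-tau,t]} w on C(I_tau) at x_i.\<close>
definition in_subdiff_max :: "real \<Rightarrow> real \<Rightarrow> real \<Rightarrow> (real \<Rightarrow> real) \<Rightarrow> (real set \<Rightarrow> real) \<Rightarrow> bool" where
  "in_subdiff_max \<tau> T t x \<nu> \<longleftrightarrow>
     (\<forall>w. continuous_on {-\<tau>..T} w \<longrightarrow>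
        Sup (w ` {t-\<tau>..t}) \<ge> Sup (x ` {t-\<tau>..t}) + spair {-\<tau>..T} \<nu> (\<lambda>s. w s - x s))"

definition argmax_win :: "real \<Rightarrow> real \<Rightarrow> (real \<Rightarrow> real) \<Rightarrow> real set" where
  "argmax_win \<tau> t x = {s\<in>{t-\<tau>..t}. \<forall>s'\<in>{t-\<tau>..t}. x s' \<le> x s}"

end

theory Submission
  imports Defs
begin


lemma space_rb: "space (restrict_space borel K) = (K::real set)"
  by (simp add: space_restrict_space)

lemma sa_bsets: "sigma_algebra K (bsets K)"
  using sets.sigma_algebra_axioms[of "restrict_space borel K"] by (simp add: bsets_def space_rb)

lemma bsets_sub: "A \<in> bsets K \<Longrightarrow> A \<subseteq> K"
  unfolding bsets_def using sets.sets_into_space space_rb by metis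
lemma bsets_Un: "A \<in> bsets K \<Longrightarrow> B \<in> bsets K \<Longrightarrow> A \<union> B \<in> bsets K"
  unfolding bsets_def by auto
lemma bsets_Int: "A \<in> bsets K \<Longrightarrow> B \<in> bsets K \<Longrightarrow> A \<inter> B \<in> bsets K"
  unfolding bsets_def by auto
lemma bsets_Diff: "A \<in> bsets K \<Longrightarrow> B \<in> bsets K \<Longrightarrow> A - B \<in> bsets K"
  unfolding bsets_def by auto
lemma bsets_empty: "{} \<in> bsets K"
  unfolding bsets_def by auto
lemma bsets_finite_Union: "finite P \<Longrightarrow> P \<subseteq> bsets K \<Longrightarrow> \<Union>P \<in> bsets K"
  unfolding bsets_def by (rule sets.finite_Union)
lemma bsets_borel: "A \<in> sets borel \<Longrightarrow> A \<subseteq> K \<Longrightarrow> A \<in> bsets K"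
  unfolding bsets_def sets_restrict_space by auto
lemma bsets_compact: "compact C \<Longrightarrow> C \<subseteq> K \<Longrightarrow> C \<in> bsets K"
  by (intro bsets_borel) (auto intro: borel_closed compact_imp_closed)
lemma bsets_openin: assumes "openin (top_of_set K) V" shows "V \<in> bsets K"
proof -
  obtain U where U: "open U" "V = K \<inter> U" using assms openin_open by blast
  have "U \<in> sets borel" using U(1) by (rule borel_open)
  then show ?thesis unfolding bsets_def sets_restrict_space U(2) by (rule imageI)
qed
lemma bsets_UN: fixes A :: "nat \<Rightarrow> real set" assumes "range A \<subseteq> bsets K" shows "\<Union>(range A) \<in> bsets K"
  using assms unfolding bsets_def by (rule sets.countable_UN)

lemma bsets_top: "K \<in> bsets K"
  unfolding bsets_def using sets.top space_rb by metis

locale sm_ctx =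
  fixes K :: "real set" and \<nu> :: "real set \<Rightarrow> real"
  assumes nu_empty: "\<nu> {} = 0"
    and nu_ca: "\<And>A::nat \<Rightarrow> real set. range A \<subseteq> bsets K \<Longrightarrow> disjoint_family A \<Longrightarrow>
        (\<lambda>n. \<nu> (A n)) sums \<nu> (\<Union>(range A))"
begin

lemma nu_add:
  assumes A: "A \<in> bsets K" and B: "B \<in> bsets K" and AB: "A \<inter> B = {}"
  shows "\<nu> (A \<union> B) = \<nu> A + \<nu> B"
proof -
  define F where "F = (\<lambda>n::nat. if n = 0 then A else if n = 1 then B else {})"
  have r: "range F \<subseteq> bsets K" using A B bsets_empty by (auto simp: F_def)
  have d: "disjoint_family F" unfolding disjoint_family_on_def F_def using AB by auto
  have u: "\<Union>(range F) = A \<union> B"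
  proof
    show "\<Union>(range F) \<subseteq> A \<union> B" by (auto simp: F_def split: if_splits)
    have "A = F 0" "B = F 1" by (auto simp: F_def)
    then show "A \<union> B \<subseteq> \<Union>(range F)" by blast
  qed
  have s1: "(\<lambda>n. \<nu> (F n)) sums \<nu> (A \<union> B)" using nu_ca[OF r d] u by simp
  have "(\<lambda>n. \<nu> (F n)) sums (\<Sum>n\<in>{0,1}. \<nu> (F n))"
    by (rule sums_finite) (auto simp: F_def nu_empty)
  then have "(\<lambda>n. \<nu> (F n)) sums (\<nu> A + \<nu> B)" by (simp add: F_def)
  then show ?thesis using s1 sums_unique2 by blast
qed

lemma nu_sum: "finite P \<Longrightarrow> P \<subseteq> bsets K \<Longrightarrow> disjoint P \<Longrightarrow> \<nu> (\<Union>P) = (\<Sum>B\<in>P. \<nu> B)"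
proof (induction P rule: finite_induct)
  case empty
  then show ?case by (simp add: nu_empty)
next
  case (insert x F)
  have dF: "disjoint F" using insert.prems(2) by (simp add: pairwise_insert)
  have xF: "x \<inter> \<Union>F = {}"
    using insert.prems(2) insert.hyps(2) by (auto simp: pairwise_insert disjnt_def)
  have "\<nu> (\<Union>(insert x F)) = \<nu> (x \<union> \<Union>F)" by simp
  also have "\<dots> = \<nu> x + \<nu> (\<Union>F)"
    using insert.prems insert.hyps xF by (intro nu_add) (auto intro: bsets_finite_Union)
  also have "\<dots> = \<nu> x + (\<Sum>B\<in>F. \<nu> B)" using insert dF by simp
  finally show ?case using insert.hyps by simp
qed

lemma nu_diff: "A \<in> bsets K \<Longrightarrow> B \<in> bsets K \<Longrightarrow> B \<subseteq> A \<Longrightarrow> \<nu> (A - B) = \<nu> A - \<nu> B"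
  using nu_add[of B "A - B"] bsets_Diff[of A K B] by (simp add: Un_absorb1 Un_Diff_cancel)

definition bad where "bad E \<longleftrightarrow> E \<in> bsets K \<and> (\<forall>b. \<exists>B\<in>bsets K. B \<subseteq> E \<and> \<nu> B > b)"

lemma bad_split:
  assumes "bad E"
  shows "\<exists>E'. bad E' \<and> E' \<subseteq> E \<and> 1 \<le> \<bar>\<nu> (E - E')\<bar>"
proof -
  have E: "E \<in> bsets K" using assms bad_def by blast
  obtain B where B: "B \<in> bsets K" "B \<subseteq> E" "\<nu> B > \<bar>\<nu> E\<bar> + 1"
    using assms unfolding bad_def by blast
  show ?thesis
  proof (cases "bad (E - B)")
    case True
    have "E - (E - B) = B" using B by blast
    then show ?thesis using True B by (intro exI[of _ "E - B"]) auto
  next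
    case False
    then obtain b2 where b2: "\<And>C. C \<in> bsets K \<Longrightarrow> C \<subseteq> E - B \<Longrightarrow> \<nu> C \<le> b2"
      using bsets_Diff[OF E B(1)] unfolding bad_def by (meson not_less)
    have "bad B"
      unfolding bad_def
    proof (intro conjI allI)
      show "B \<in> bsets K" by fact
      fix b
      obtain C where C: "C \<in> bsets K" "C \<subseteq> E" "\<nu> C > b + b2" using assms unfolding bad_def by blast
      have "\<nu> C = \<nu> (C \<inter> B) + \<nu> (C - B)"
        using nu_add[of "C \<inter> B" "C - B"] C B bsets_Int bsets_Diff by (metis Int_Diff_Un Int_Diff_disjoint)
      moreover have "\<nu> (C - B) \<le> b2" using b2[of "C - B"] C B bsets_Diff by blast
      ultimately have "\<nu> (C \<inter> B) > b" using C by linarith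
      then show "\<exists>B'\<in>bsets K. B' \<subseteq> B \<and> b < \<nu> B'" using C B bsets_Int by blast
    qed
    moreover have "\<nu> (E - B) = \<nu> E - \<nu> B" using nu_diff E B by blast
    ultimately show ?thesis using B by (intro exI[of _ B]) auto
  qed
qed

lemma nu_bdd_above: "\<exists>b. \<forall>B\<in>bsets K. \<nu> B \<le> b"
proof (rule ccontr)
  assume na: "\<not> ?thesis"
  have "bad K" unfolding bad_def
  proof (intro conjI allI)
    show "K \<in> bsets K" by (rule bsets_top)
    fix b
    obtain B where "B \<in> bsets K" "\<nu> B > b" using na by (meson not_less)
    then show "\<exists>B\<in>bsets K. B \<subseteq> K \<and> b < \<nu> B" using bsets_sub by blast
  qed
  obtain g where g: "\<And>E. bad E \<Longrightarrow> bad (g E) \<and> g E \<subseteq> E \<and> 1 \<le> \<bar>\<nu> (E - g E)\<bar>"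
    using bad_split by metis
  define S where "S n = (g ^^ n) K" for n
  have badS: "bad (S n)" for n
    by (induction n) (auto simp: S_def \<open>bad K\<close> g)
  have Suc: "S (Suc n) = g (S n)" for n by (simp add: S_def)
  have dec: "decseq S"
    by (rule decseq_SucI) (simp add: Suc g badS)
  define F where "F n = S n - S (Suc n)" for n
  have FK: "range F \<subseteq> bsets K"
    using badS bsets_Diff unfolding F_def bad_def by blast
  have dF: "disjoint_family F"
  proof (unfold disjoint_family_on_def, intro ballI impI)
    fix m n :: nat assume "m \<noteq> n"
    have *: "F a \<inter> F b = {}" if "a < b" for a b
    proof -
      have "S b \<subseteq> S (Suc a)" using dec that by (simp add: decseq_def)
      then show ?thesis unfolding F_def by blast
    qed
    show "F m \<inter> F n = {}"
      using \<open>m \<noteq> n\<close> *[of m n] *[of n m] by (metis Int_commute linorder_neqE_nat)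
  qed
  have "summable (\<lambda>n. \<nu> (F n))" using nu_ca[OF FK dF] sums_summable by blast
  then have "(\<lambda>n. \<nu> (F n)) \<longlonglongrightarrow> 0" by (rule summable_LIMSEQ_zero)
  then have "\<exists>N. \<forall>n\<ge>N. norm (\<nu> (F n) - 0) < 1" by (rule LIMSEQ_D) simp
  then obtain N where "\<And>n. n \<ge> N \<Longrightarrow> norm (\<nu> (F n) - 0) < 1" by blast
  moreover have "1 \<le> \<bar>\<nu> (F N)\<bar>" using g[OF badS[of N]] by (simp add: F_def Suc)
  ultimately show False by fastforce
qed

lemma neg_ctx: "sm_ctx K (\<lambda>A. - \<nu> A)"
  by unfold_locales (auto simp: nu_empty intro: sums_minus nu_ca)

end

lemma (in sm_ctx) nu_bounded: "\<exists>S. \<forall>B\<in>bsets K. \<bar>\<nu> B\<bar> \<le> S"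
proof -
  obtain b1 where b1: "\<forall>B\<in>bsets K. \<nu> B \<le> b1" using nu_bdd_above by blast
  obtain b2 where b2: "\<forall>B\<in>bsets K. - \<nu> B \<le> b2" using sm_ctx.nu_bdd_above[OF neg_ctx] by blast
  show ?thesis using b1 b2 by (intro exI[of _ "max b1 b2"]) (auto simp: abs_if)
qed




context sm_ctx begin

definition Sb where "Sb = (SOME S. \<forall>B\<in>bsets K. \<bar>\<nu> B\<bar> \<le> S)"

lemma Sb: "B \<in> bsets K \<Longrightarrow> \<bar>\<nu> B\<bar> \<le> Sb"
  using someI_ex[OF nu_bounded] unfolding Sb_def by blast

definition Parts where "Parts A = {P. finite P \<and> P \<subseteq> bsets K \<and> disjoint P \<and> \<Union>P = A}"

lemma tv_eq: "tv K \<nu> A = (SUP P\<in>Parts A. \<Sum>B\<in>P. \<bar>\<nu> B\<bar>)"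
  unfolding tv_def Parts_def by simp

lemma nu_sum_sub:
  assumes "finite P" "P \<subseteq> bsets K" "disjoint P" "Q \<subseteq> P"
  shows "\<nu> (\<Union>Q) = (\<Sum>B\<in>Q. \<nu> B)"
  using assms by (intro nu_sum) (auto intro: finite_subset pairwise_subset)

lemma sum_abs_le:
  assumes P: "finite P" "P \<subseteq> bsets K" "disjoint P"
  shows "(\<Sum>B\<in>P. \<bar>\<nu> B\<bar>) \<le> 2 * Sb"
proof -
  define Pp where "Pp = {B\<in>P. 0 \<le> \<nu> B}"
  define Pn where "Pn = {B\<in>P. \<nu> B < 0}"
  have un: "P = Pp \<union> Pn" unfolding Pp_def Pn_def by auto
  have dj: "Pp \<inter> Pn = {}" unfolding Pp_def Pn_def by auto
  have fp: "finite Pp" "finite Pn" using P(1) unfolding Pp_def Pn_def by auto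
  have "(\<Sum>B\<in>P. \<bar>\<nu> B\<bar>) = (\<Sum>B\<in>Pp. \<bar>\<nu> B\<bar>) + (\<Sum>B\<in>Pn. \<bar>\<nu> B\<bar>)"
    unfolding un by (rule sum.union_disjoint[OF fp dj])
  also have "(\<Sum>B\<in>Pp. \<bar>\<nu> B\<bar>) = (\<Sum>B\<in>Pp. \<nu> B)"
    by (rule sum.cong) (auto simp: Pp_def)
  also have "(\<Sum>B\<in>Pn. \<bar>\<nu> B\<bar>) = (\<Sum>B\<in>Pn. - \<nu> B)"
    by (rule sum.cong) (auto simp: Pn_def)
  also have "\<dots> = - (\<Sum>B\<in>Pn. \<nu> B)" by (rule sum_negf)
  also have "(\<Sum>B\<in>Pp. \<nu> B) = \<nu> (\<Union>Pp)"
    by (rule nu_sum_sub[OF P, symmetric]) (auto simp: Pp_def)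
  also have "(\<Sum>B\<in>Pn. \<nu> B) = \<nu> (\<Union>Pn)"
    by (rule nu_sum_sub[OF P, symmetric]) (auto simp: Pn_def)
  finally have eq: "(\<Sum>B\<in>P. \<bar>\<nu> B\<bar>) = \<nu> (\<Union>Pp) + - \<nu> (\<Union>Pn)" .
  have "\<Union>Pp \<in> bsets K" "\<Union>Pn \<in> bsets K"
    using P fp by (auto intro!: bsets_finite_Union simp: Pp_def Pn_def)
  from Sb[OF this(1)] Sb[OF this(2)] eq show ?thesis by linarith
qed

lemma tv_bdd: "bdd_above ((\<lambda>P. \<Sum>B\<in>P. \<bar>\<nu> B\<bar>) ` Parts A)"
  using sum_abs_le unfolding Parts_def by (intro bdd_aboveI[of _ "2 * Sb"]) auto

lemma Parts_single: "A \<in> bsets K \<Longrightarrow> {A} \<in> Parts A"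
  unfolding Parts_def by auto

lemma tv_ge_abs: "A \<in> bsets K \<Longrightarrow> \<bar>\<nu> A\<bar> \<le> tv K \<nu> A"
  unfolding tv_eq using cSUP_upper[OF Parts_single tv_bdd] by fastforce

lemma tv_nonneg: "A \<in> bsets K \<Longrightarrow> 0 \<le> tv K \<nu> A"
  using tv_ge_abs[of A] by linarith

lemma sum_inter_le_tv:
  assumes R: "finite R" "R \<subseteq> bsets K" "disjoint R" and A: "A \<in> bsets K" "A \<subseteq> \<Union>R"
  shows "(\<Sum>X\<in>R. \<bar>\<nu> (X \<inter> A)\<bar>) \<le> tv K \<nu> A"
proof -
  define h where "h X = X \<inter> A" for X
  have Q: "h ` R \<in> Parts A"
    unfolding Parts_def
  proof (intro CollectI conjI)
    show "finite (h ` R)" using R by simp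
    show "h ` R \<subseteq> bsets K" using R A bsets_Int by (auto simp: h_def)
    show "disjoint (h ` R)"
      unfolding pairwise_def disjnt_def
    proof (intro ballI impI)
      fix a b assume ab: "a \<in> h ` R" "b \<in> h ` R" "a \<noteq> b"
      then obtain X Y where XY: "X \<in> R" "Y \<in> R" "a = h X" "b = h Y" by blast
      with ab(3) have "X \<noteq> Y" by blast
      then have "X \<inter> Y = {}" using R(3) XY(1,2) unfolding pairwise_def disjnt_def by blast
      then show "a \<inter> b = {}" using XY(3,4) by (auto simp: h_def)
    qed
    show "\<Union>(h ` R) = A" using A by (auto simp: h_def)
  qed
  have eq: "(\<Sum>Y\<in>h ` R. \<bar>\<nu> Y\<bar>) = (\<Sum>X\<in>R. \<bar>\<nu> (h X)\<bar>)"
  proof (rule sum.reindex_nontrivial[OF R(1), unfolded comp_def])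
    fix x y assume xy: "x \<in> R" "y \<in> R" "x \<noteq> y" "h x = h y"
    then have "x \<inter> y = {}" using R(3) unfolding pairwise_def disjnt_def by blast
    then have "h x = {}" using xy(4) unfolding h_def by blast
    then show "\<bar>\<nu> (h x)\<bar> = 0" by (simp add: nu_empty)
  qed
  have le: "(\<Sum>Y\<in>h ` R. \<bar>\<nu> Y\<bar>) \<le> tv K \<nu> A"
    unfolding tv_eq by (rule cSUP_upper[OF Q tv_bdd])
  have "(\<Sum>X\<in>R. \<bar>\<nu> (X \<inter> A)\<bar>) = (\<Sum>X\<in>R. \<bar>\<nu> (h X)\<bar>)" by (simp add: h_def)
  then show ?thesis using eq le by linarith
qed

lemma tv_add:
  assumes A: "A \<in> bsets K" and B: "B \<in> bsets K" and AB: "A \<inter> B = {}"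
  shows "tv K \<nu> (A \<union> B) = tv K \<nu> A + tv K \<nu> B"
proof (rule antisym)
  show "tv K \<nu> (A \<union> B) \<le> tv K \<nu> A + tv K \<nu> B"
    unfolding tv_eq[of "A \<union> B"]
  proof (rule cSUP_least)
    show "Parts (A \<union> B) \<noteq> {}" using Parts_single bsets_Un[OF A B] by blast
    fix R assume "R \<in> Parts (A \<union> B)"
    then have R: "finite R" "R \<subseteq> bsets K" "disjoint R" "\<Union>R = A \<union> B" unfolding Parts_def by auto
    have "(\<Sum>X\<in>R. \<bar>\<nu> X\<bar>) \<le> (\<Sum>X\<in>R. \<bar>\<nu> (X \<inter> A)\<bar> + \<bar>\<nu> (X \<inter> B)\<bar>)"
    proof (rule sum_mono)
      fix X assume X: "X \<in> R"
      then have "X \<in> bsets K" "X \<subseteq> A \<union> B" using R by auto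
      then have e: "(X \<inter> A) \<union> (X \<inter> B) = X" by blast
      have d0: "(X \<inter> A) \<inter> (X \<inter> B) = {}" using AB by blast
      have "\<nu> ((X \<inter> A) \<union> (X \<inter> B)) = \<nu> (X \<inter> A) + \<nu> (X \<inter> B)"
        by (rule nu_add[OF bsets_Int[OF \<open>X \<in> bsets K\<close> A] bsets_Int[OF \<open>X \<in> bsets K\<close> B] d0])
      then have "\<nu> X = \<nu> (X \<inter> A) + \<nu> (X \<inter> B)" unfolding e .
      then show "\<bar>\<nu> X\<bar> \<le> \<bar>\<nu> (X \<inter> A)\<bar> + \<bar>\<nu> (X \<inter> B)\<bar>" by linarith
    qed
    also have "\<dots> = (\<Sum>X\<in>R. \<bar>\<nu> (X \<inter> A)\<bar>) + (\<Sum>X\<in>R. \<bar>\<nu> (X \<inter> B)\<bar>)" by (rule sum.distrib)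
    also have "\<dots> \<le> tv K \<nu> A + tv K \<nu> B"
      using sum_inter_le_tv[OF R(1-3) A] sum_inter_le_tv[OF R(1-3) B] R(4) by (intro add_mono) auto
    finally show "(\<Sum>X\<in>R. \<bar>\<nu> X\<bar>) \<le> tv K \<nu> A + tv K \<nu> B" .
  qed
next
  have key: "(\<Sum>X\<in>P. \<bar>\<nu> X\<bar>) + (\<Sum>X\<in>Q. \<bar>\<nu> X\<bar>) \<le> tv K \<nu> (A \<union> B)"
    if P: "P \<in> Parts A" and Q: "Q \<in> Parts B" for P Q
  proof -
    have P': "finite P" "P \<subseteq> bsets K" "disjoint P" "\<Union>P = A" using P unfolding Parts_def by auto
    have Q': "finite Q" "Q \<subseteq> bsets K" "disjoint Q" "\<Union>Q = B" using Q unfolding Parts_def by auto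
    have PQ: "P \<union> Q \<in> Parts (A \<union> B)"
      unfolding Parts_def
    proof (intro CollectI conjI)
      show "disjoint (P \<union> Q)"
        unfolding pairwise_def disjnt_def
      proof (intro ballI impI)
        fix X Y assume XY: "X \<in> P \<union> Q" "Y \<in> P \<union> Q" "X \<noteq> Y"
        have XA: "X \<in> P \<Longrightarrow> X \<subseteq> A" "Y \<in> P \<Longrightarrow> Y \<subseteq> A" using P'(4) by auto
        have XB: "X \<in> Q \<Longrightarrow> X \<subseteq> B" "Y \<in> Q \<Longrightarrow> Y \<subseteq> B" using Q'(4) by auto
        have pP: "X \<in> P \<Longrightarrow> Y \<in> P \<Longrightarrow> X \<inter> Y = {}"
          using P'(3) XY(3) unfolding pairwise_def disjnt_def by blast
        have pQ: "X \<in> Q \<Longrightarrow> Y \<in> Q \<Longrightarrow> X \<inter> Y = {}"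
          using Q'(3) XY(3) unfolding pairwise_def disjnt_def by blast
        show "X \<inter> Y = {}"
        proof (cases "X \<in> P")
          case True
          show ?thesis
          proof (cases "Y \<in> P")
            case True then show ?thesis using pP \<open>X \<in> P\<close> by blast
          next
            case False then have "Y \<in> Q" using XY by blast
            then show ?thesis using XA(1)[OF \<open>X \<in> P\<close>] XB(2) AB by blast
          qed
        next
          case False then have XQ: "X \<in> Q" using XY by blast
          show ?thesis
          proof (cases "Y \<in> P")
            case True then show ?thesis using XB(1)[OF XQ] XA(2) AB by blast
          next
            case False then have "Y \<in> Q" using XY by blast
            then show ?thesis using pQ XQ by blast
          qed
        qed
      qed
    qed (use P' Q' in auto)
    have "(\<Sum>X\<in>P \<inter> Q. \<bar>\<nu> X\<bar>) = 0"
    proof (rule sum.neutral, intro ballI)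
      fix X assume "X \<in> P \<inter> Q"
      then have "X = {}" using P'(4) Q'(4) AB by blast
      then show "\<bar>\<nu> X\<bar> = 0" by (simp add: nu_empty)
    qed
    then have "(\<Sum>X\<in>P \<union> Q. \<bar>\<nu> X\<bar>) = (\<Sum>X\<in>P. \<bar>\<nu> X\<bar>) + (\<Sum>X\<in>Q. \<bar>\<nu> X\<bar>)"
      using sum_Un[OF P'(1) Q'(1), of "\<lambda>X. \<bar>\<nu> X\<bar>"] by simp
    then show ?thesis unfolding tv_eq[of "A \<union> B"] using cSUP_upper[OF PQ tv_bdd] by simp
  qed
  have "tv K \<nu> B \<le> tv K \<nu> (A \<union> B) - tv K \<nu> A"
    unfolding tv_eq[of B]
  proof (rule cSUP_least)
    show "Parts B \<noteq> {}" using Parts_single B by blast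
    fix Q assume Q: "Q \<in> Parts B"
    have "tv K \<nu> A \<le> tv K \<nu> (A \<union> B) - (\<Sum>X\<in>Q. \<bar>\<nu> X\<bar>)"
      unfolding tv_eq[of A]
    proof (rule cSUP_least)
      show "Parts A \<noteq> {}" using Parts_single A by blast
      fix P assume "P \<in> Parts A"
      from key[OF this Q] show "(\<Sum>X\<in>P. \<bar>\<nu> X\<bar>) \<le> tv K \<nu> (A \<union> B) - (\<Sum>X\<in>Q. \<bar>\<nu> X\<bar>)" by simp
    qed
    then show "(\<Sum>X\<in>Q. \<bar>\<nu> X\<bar>) \<le> tv K \<nu> (A \<union> B) - tv K \<nu> A" by simp
  qed
  then show "tv K \<nu> A + tv K \<nu> B \<le> tv K \<nu> (A \<union> B)" by simp
qed

lemma tv_diff: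
  assumes "A \<in> bsets K" "B \<in> bsets K" "B \<subseteq> A"
  shows "tv K \<nu> (A - B) = tv K \<nu> A - tv K \<nu> B"
proof -
  have "A = B \<union> (A - B)" using assms by blast
  then have "tv K \<nu> A = tv K \<nu> B + tv K \<nu> (A - B)"
    using tv_add[of B "A - B"] assms bsets_Diff by (metis Diff_disjoint)
  then show ?thesis by simp
qed

lemma tv_mono: "A \<in> bsets K \<Longrightarrow> B \<in> bsets K \<Longrightarrow> B \<subseteq> A \<Longrightarrow> tv K \<nu> B \<le> tv K \<nu> A"
  using tv_diff[of A B] tv_nonneg[of "A - B"] bsets_Diff by fastforce

lemma tv_empty: "tv K \<nu> {} = 0"
proof -
  have "tv K \<nu> {} = tv K \<nu> ({} \<union> {})" by simp
  also have "\<dots> = tv K \<nu> {} + tv K \<nu> {}" using tv_add[OF bsets_empty bsets_empty] by simp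
  finally show ?thesis by simp
qed

lemma tv_ca:
  assumes r: "range A \<subseteq> bsets K" and d: "disjoint_family A"
  shows "(\<lambda>n. tv K \<nu> (A n)) sums tv K \<nu> (\<Union>(range A))"
proof -
  define U where "U = \<Union>(range A)"
  have U: "U \<in> bsets K" unfolding U_def by (rule bsets_UN[OF r])
  have An: "A n \<in> bsets K" for n using r by auto
  have fin: "(\<Union>i<m. A i) \<in> bsets K" for m
    using r by (intro bsets_finite_Union) auto
  have part: "tv K \<nu> (\<Union>i<m. A i) = (\<Sum>i<m. tv K \<nu> (A i))" for m
  proof (induction m)
    case 0 show ?case by (simp add: tv_empty)
  next
    case (Suc m)
    have e: "(\<Union>i<Suc m. A i) = (\<Union>i<m. A i) \<union> A m" by (auto simp: lessThan_Suc)
    have "A i \<inter> A m = {}" if "i < m" for i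
      using d that unfolding disjoint_family_on_def by (metis UNIV_I nat_neq_iff)
    then have "(\<Union>i<m. A i) \<inter> A m = {}" by blast
    then show ?case using e tv_add[OF fin[of m] An[of m]] Suc by simp
  qed
  have psum: "(\<Sum>i<m. tv K \<nu> (A i)) \<le> tv K \<nu> U" for m
    using part[of m] tv_mono[OF U fin[of m]] by (auto simp: U_def)
  have nn: "0 \<le> tv K \<nu> (A n)" for n using tv_nonneg[OF An] .
  have summ: "summable (\<lambda>n. tv K \<nu> (A n))"
    using nn psum by (intro summableI_nonneg_bounded) auto
  have le1: "(\<Sum>n. tv K \<nu> (A n)) \<le> tv K \<nu> U"
    using summ psum by (intro suminf_le_const) auto
  have le2: "tv K \<nu> U \<le> (\<Sum>n. tv K \<nu> (A n))"
    unfolding tv_eq[of U]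
  proof (rule cSUP_least)
    show "Parts U \<noteq> {}" using Parts_single U by blast
    fix R assume "R \<in> Parts U"
    then have R: "finite R" "R \<subseteq> bsets K" "disjoint R" "\<Union>R = U" unfolding Parts_def by auto
    have sX: "summable (\<lambda>n. \<bar>\<nu> (X \<inter> A n)\<bar>)" if X: "X \<in> R" for X
    proof (rule summable_comparison_test[OF _ summ])
      have "\<bar>\<nu> (X \<inter> A n)\<bar> \<le> tv K \<nu> (A n)" for n
        using tv_ge_abs[of "X \<inter> A n"] tv_mono[of "A n" "X \<inter> A n"] X R An bsets_Int by force
      then show "\<exists>N. \<forall>n\<ge>N. norm \<bar>\<nu> (X \<inter> A n)\<bar> \<le> tv K \<nu> (A n)" by auto
    qed
    have "(\<Sum>X\<in>R. \<bar>\<nu> X\<bar>) \<le> (\<Sum>X\<in>R. \<Sum>n. \<bar>\<nu> (X \<inter> A n)\<bar>)"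
    proof (rule sum_mono)
      fix X assume X: "X \<in> R"
      have rX: "range (\<lambda>n. X \<inter> A n) \<subseteq> bsets K" using X R An bsets_Int by blast
      have dX: "disjoint_family (\<lambda>n. X \<inter> A n)" using d unfolding disjoint_family_on_def by blast
      have uX: "(\<Union>n. X \<inter> A n) = X" using X R(4) unfolding U_def by blast
      have "(\<lambda>n. \<nu> (X \<inter> A n)) sums \<nu> X" using nu_ca[OF rX dX] uX by simp
      then have "\<nu> X = (\<Sum>n. \<nu> (X \<inter> A n))" by (simp add: sums_iff)
      then show "\<bar>\<nu> X\<bar> \<le> (\<Sum>n. \<bar>\<nu> (X \<inter> A n)\<bar>)" using summable_rabs[OF sX[OF X]] by simp
    qed
    also have "\<dots> = (\<Sum>n. \<Sum>X\<in>R. \<bar>\<nu> (X \<inter> A n)\<bar>)"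
      by (rule suminf_sum[symmetric]) (rule sX)
    also have "\<dots> \<le> (\<Sum>n. tv K \<nu> (A n))"
    proof (rule suminf_le)
      show "(\<Sum>X\<in>R. \<bar>\<nu> (X \<inter> A n)\<bar>) \<le> tv K \<nu> (A n)" for n
        using sum_inter_le_tv[OF R(1-3) An[of n]] R(4) unfolding U_def by blast
      show "summable (\<lambda>n. \<Sum>X\<in>R. \<bar>\<nu> (X \<inter> A n)\<bar>)" using sX by (intro summable_sum) auto
    qed (rule summ)
    finally show "(\<Sum>X\<in>R. \<bar>\<nu> X\<bar>) \<le> (\<Sum>n. tv K \<nu> (A n))" .
  qed
  from le1 le2 have "tv K \<nu> U = (\<Sum>n. tv K \<nu> (A n))" by simp
  then show ?thesis using summ by (simp add: U_def sums_iff)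
qed

end




lemma ms_gen:
  fixes g :: "real set \<Rightarrow> real"
  assumes g0: "\<And>A. A \<in> bsets K \<Longrightarrow> 0 \<le> g A" and ge: "g {} = 0"
    and gca: "\<And>A::nat \<Rightarrow> real set. range A \<subseteq> bsets K \<Longrightarrow> disjoint_family A \<Longrightarrow> (\<lambda>n. g (A n)) sums g (\<Union>(range A))"
    and A: "A \<in> bsets K"
  shows "emeasure (measure_of K (bsets K) (\<lambda>A. ennreal (g A))) A = ennreal (g A)"
proof (rule emeasure_measure_of_sigma[OF sa_bsets _ _ A])
  show "positive (bsets K) (\<lambda>A. ennreal (g A))" unfolding positive_def by (simp add: ge)
  show "countably_additive (bsets K) (\<lambda>A. ennreal (g A))"
    unfolding countably_additive_def
  proof (intro allI impI)
    fix F :: "nat \<Rightarrow> real set"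
    assume r: "range F \<subseteq> bsets K" and d: "disjoint_family F" and "\<Union>(range F) \<in> bsets K"
    have s: "(\<lambda>n. g (F n)) sums g (\<Union>(range F))" by (rule gca[OF r d])
    have "(\<Sum>i. ennreal (g (F i))) = ennreal (\<Sum>i. g (F i))"
      using s r g0 by (intro suminf_ennreal2) (auto simp: sums_iff)
    also have "\<dots> = ennreal (g (\<Union>(range F)))" using s by (simp add: sums_iff)
    finally show "(\<Sum>i. ennreal (g (F i))) = ennreal (g (\<Union>(range F)))" .
  qed
qed

lemma bsets_pow: "bsets K \<subseteq> Pow K" using bsets_sub by blast

lemma sets_mo: "sets (measure_of K (bsets K) f) = bsets K"
  by (simp add: sets_measure_of[OF bsets_pow] sigma_algebra.sigma_sets_eq[OF sa_bsets])

lemma space_mo: "space (measure_of K (bsets K) f) = K"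
  by (simp add: space_measure_of[OF bsets_pow])

lemma integ_gen:
  fixes M :: "real measure" and z :: "real \<Rightarrow> real" and B :: real
  assumes "sets M = bsets K" "space M = K" "emeasure M K \<noteq> \<infinity>" "continuous_on K z"
    "\<And>s. s \<in> K \<Longrightarrow> \<bar>z s\<bar> \<le> B"
  shows "integrable M z"
proof -
  interpret finite_measure M by (metis assms(2,3) finite_measureI)
  have "z \<in> borel_measurable (restrict_space borel K)"
    by (rule borel_measurable_continuous_on_restrict[OF assms(4)])
  moreover have "sets M = sets (restrict_space borel K)" using assms(1) by (simp add: bsets_def)
  ultimately have "z \<in> borel_measurable M" using measurable_cong_sets[of M "restrict_space borel K" borel borel] by simp
  then show ?thesis
    by (intro integrable_const_bound[where B=B]) (auto simp: assms intro!: AE_I2)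
qed

lemma int_le_gen:
  fixes M :: "real measure" and z :: "real \<Rightarrow> real"
  assumes M: "sets M = bsets K" "space M = K" "emeasure M K \<noteq> \<infinity>" and z: "continuous_on K z"
    "\<And>s. s \<in> K \<Longrightarrow> \<bar>z s\<bar> \<le> 1" and V: "V \<in> bsets K"
    and le: "\<And>s. s \<in> K \<Longrightarrow> z s \<le> indicator V s"
  shows "integral\<^sup>L M z \<le> measure M V"
proof -
  interpret finite_measure M by (metis M(2,3) finite_measureI)
  have VM: "V \<in> sets M" using V M(1) by simp
  have iz: "integrable M z" by (rule integ_gen[OF M z])
  have iV: "integrable M (indicator V :: real \<Rightarrow> real)"
    by (intro integrable_real_indicator VM) (simp add: less_top[symmetric])
  have "integral\<^sup>L M z \<le> integral\<^sup>L M (indicator V)"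
    by (rule integral_mono[OF iz iV]) (use le M(2) in auto)
  also have "integral\<^sup>L M (indicator V :: real \<Rightarrow> real) = measure M V"
    using sets.sets_into_space[OF VM] by (simp add: Int_absorb2)
  finally show ?thesis .
qed

lemma int_ge_gen:
  fixes M :: "real measure" and z :: "real \<Rightarrow> real"
  assumes M: "sets M = bsets K" "space M = K" "emeasure M K \<noteq> \<infinity>" and z: "continuous_on K z"
    "\<And>s. s \<in> K \<Longrightarrow> \<bar>z s\<bar> \<le> 1" and V: "V \<in> bsets K"
    and le: "\<And>s. s \<in> K \<Longrightarrow> indicator V s \<le> z s"
  shows "measure M V \<le> integral\<^sup>L M z"
proof -
  interpret finite_measure M by (metis M(2,3) finite_measureI)
  have VM: "V \<in> sets M" using V M(1) by simp
  have iz: "integrable M z" by (rule integ_gen[OF M z])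
  have iV: "integrable M (indicator V :: real \<Rightarrow> real)"
    by (intro integrable_real_indicator VM) (simp add: less_top[symmetric])
  have "integral\<^sup>L M (indicator V :: real \<Rightarrow> real) = measure M V"
    using sets.sets_into_space[OF VM] by (simp add: Int_absorb2)
  moreover have "integral\<^sup>L M (indicator V) \<le> integral\<^sup>L M z"
    by (rule integral_mono[OF iV iz]) (use le M(2) in auto)
  ultimately show ?thesis by simp
qed

context sm_ctx begin

lemma nu_le_tv: assumes "A \<in> bsets K" shows "\<nu> A \<le> tv K \<nu> A" "- \<nu> A \<le> tv K \<nu> A"
  using abs_le_D1[OF tv_ge_abs[OF assms]] abs_le_D2[OF tv_ge_abs[OF assms]] by auto
lemma gp_nonneg': assumes "A \<in> bsets K" shows "0 \<le> tv K \<nu> A + \<nu> A"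
  using nu_le_tv[OF assms] by linarith
lemma gn_nonneg': assumes "A \<in> bsets K" shows "\<nu> A \<le> tv K \<nu> A"
  using nu_le_tv[OF assms] by linarith
lemma gp_nonneg: assumes "A \<in> bsets K" shows "0 \<le> (tv K \<nu> A + \<nu> A) / 2"
  using gp_nonneg'[OF assms] by simp
lemma gn_nonneg: assumes "A \<in> bsets K" shows "0 \<le> (tv K \<nu> A - \<nu> A) / 2"
  using gn_nonneg'[OF assms] by simp

lemma emeasure_pos: "A \<in> bsets K \<Longrightarrow> emeasure (sm_pos K \<nu>) A = ennreal ((tv K \<nu> A + \<nu> A) / 2)"
  unfolding sm_pos_def
  by (rule ms_gen[where g="\<lambda>A. (tv K \<nu> A + \<nu> A) / 2"])
     (auto simp: gp_nonneg gp_nonneg' tv_empty nu_empty intro!: sums_divide sums_add tv_ca nu_ca)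

lemma emeasure_neg: "A \<in> bsets K \<Longrightarrow> emeasure (sm_neg K \<nu>) A = ennreal ((tv K \<nu> A - \<nu> A) / 2)"
  unfolding sm_neg_def
  by (rule ms_gen[where g="\<lambda>A. (tv K \<nu> A - \<nu> A) / 2"])
     (auto simp: gn_nonneg gn_nonneg' tv_empty nu_empty intro!: sums_divide sums_diff tv_ca nu_ca)

lemma measure_pos: "A \<in> bsets K \<Longrightarrow> measure (sm_pos K \<nu>) A = (tv K \<nu> A + \<nu> A) / 2"
  using emeasure_pos gp_nonneg by (simp add: measure_def)
lemma measure_neg: "A \<in> bsets K \<Longrightarrow> measure (sm_neg K \<nu>) A = (tv K \<nu> A - \<nu> A) / 2"
  using emeasure_neg gn_nonneg by (simp add: measure_def)

lemma pos_props: "sets (sm_pos K \<nu>) = bsets K" "space (sm_pos K \<nu>) = K" "emeasure (sm_pos K \<nu>) K \<noteq> \<infinity>"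
  by (auto simp: sm_pos_def sets_mo space_mo) (metis emeasure_pos bsets_top ennreal_neq_top sm_pos_def)
lemma neg_props: "sets (sm_neg K \<nu>) = bsets K" "space (sm_neg K \<nu>) = K" "emeasure (sm_neg K \<nu>) K \<noteq> \<infinity>"
  by (auto simp: sm_neg_def sets_mo space_mo) (metis emeasure_neg bsets_top ennreal_neq_top sm_neg_def)

lemma spair_upper:
  assumes z: "continuous_on K z" "\<And>s. s \<in> K \<Longrightarrow> 0 \<le> z s \<and> z s \<le> 1"
    and CV: "C \<in> bsets K" "V \<in> bsets K" "C \<subseteq> V"
    and z1: "\<And>s. s \<in> C \<Longrightarrow> z s = 1" and z0: "\<And>s. s \<in> K \<Longrightarrow> s \<notin> V \<Longrightarrow> z s = 0"
  shows "spair K \<nu> z \<le> \<nu> C + tv K \<nu> (V - C)"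
proof -
  have zb: "\<And>s. s \<in> K \<Longrightarrow> \<bar>z s\<bar> \<le> 1" using z(2) by fastforce
  have a: "integral\<^sup>L (sm_pos K \<nu>) z \<le> measure (sm_pos K \<nu>) V"
    using z(2) z0 by (intro int_le_gen[OF pos_props z(1) zb CV(2)]) (auto simp: indicator_def)
  have b: "measure (sm_neg K \<nu>) C \<le> integral\<^sup>L (sm_neg K \<nu>) z"
    using z(2) z1 CV bsets_sub by (intro int_ge_gen[OF neg_props z(1) zb CV(1)]) (auto simp: indicator_def)
  have "tv K \<nu> (V - C) = tv K \<nu> V - tv K \<nu> C" "\<nu> (V - C) = \<nu> V - \<nu> C"
    using tv_diff nu_diff CV by auto
  moreover have "\<nu> (V - C) \<le> tv K \<nu> (V - C)" using nu_le_tv bsets_Diff CV by blast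
  moreover have "spair K \<nu> z \<le> (tv K \<nu> V + \<nu> V) / 2 - (tv K \<nu> C - \<nu> C) / 2"
    using a b measure_pos[OF CV(2)] measure_neg[OF CV(1)] unfolding spair_def by linarith
  ultimately show ?thesis unfolding add_divide_distrib diff_divide_distrib by linarith
qed

lemma spair_lower:
  assumes z: "continuous_on K z" "\<And>s. s \<in> K \<Longrightarrow> 0 \<le> z s \<and> z s \<le> 1"
    and CV: "C \<in> bsets K" "V \<in> bsets K" "C \<subseteq> V"
    and z1: "\<And>s. s \<in> C \<Longrightarrow> z s = 1" and z0: "\<And>s. s \<in> K \<Longrightarrow> s \<notin> V \<Longrightarrow> z s = 0"
  shows "(tv K \<nu> C + \<nu> C) / 2 - (tv K \<nu> V - \<nu> V) / 2 \<le> spair K \<nu> z"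
proof -
  have zb: "\<And>s. s \<in> K \<Longrightarrow> \<bar>z s\<bar> \<le> 1" using z(2) by fastforce
  have a: "integral\<^sup>L (sm_neg K \<nu>) z \<le> measure (sm_neg K \<nu>) V"
    using z(2) z0 by (intro int_le_gen[OF neg_props z(1) zb CV(2)]) (auto simp: indicator_def)
  have b: "measure (sm_pos K \<nu>) C \<le> integral\<^sup>L (sm_pos K \<nu>) z"
    using z(2) z1 CV bsets_sub by (intro int_ge_gen[OF pos_props z(1) zb CV(1)]) (auto simp: indicator_def)
  show ?thesis using a b measure_pos[OF CV(1)] measure_neg[OF CV(2)]
    unfolding spair_def by linarith
qed

lemma inner_reg:
  assumes reg: "regular_sm K \<nu>" and A: "A \<in> bsets K" and e: "0 < e"
  shows "\<exists>C. compact C \<and> C \<subseteq> A \<and> tv K \<nu> (A - C) < e"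
proof -
  have eq: "tv K \<nu> A = (SUP C \<in> {C. compact C \<and> C \<subseteq> A}. tv K \<nu> C)" using reg A unfolding regular_sm_def by blast
  have CA: "C \<in> bsets K" if "C \<in> {C. compact C \<and> C \<subseteq> A}" for C
    using that bsets_compact bsets_sub[OF A] by blast
  have "{} \<in> {C. compact C \<and> C \<subseteq> A}" by auto
  then have ne: "{C. compact C \<and> C \<subseteq> A} \<noteq> {}" by blast
  have bdd: "bdd_above ((\<lambda>C. tv K \<nu> C) ` {C. compact C \<and> C \<subseteq> A})"
    using CA tv_mono A by (intro bdd_aboveI[of _ "tv K \<nu> A"]) auto
  have "tv K \<nu> A - e < (SUP C \<in> {C. compact C \<and> C \<subseteq> A}. tv K \<nu> C)" using eq e by simp
  then obtain C where C: "compact C" "C \<subseteq> A" "tv K \<nu> A - e < tv K \<nu> C"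
    using less_cSUP_iff[OF ne bdd] by auto
  have "tv K \<nu> (A - C) = tv K \<nu> A - tv K \<nu> C" using tv_diff A CA C by auto
  then show ?thesis using C by (intro exI[of _ C]) auto
qed

lemma outer_reg:
  assumes reg: "regular_sm K \<nu>" and A: "A \<in> bsets K" and e: "0 < e"
  shows "\<exists>V. openin (top_of_set K) V \<and> A \<subseteq> V \<and> tv K \<nu> (V - A) < e"
proof -
  have eq: "tv K \<nu> A = (INF V \<in> {V. openin (top_of_set K) V \<and> A \<subseteq> V}. tv K \<nu> V)" using reg A unfolding regular_sm_def by blast
  have VA: "V \<in> bsets K" if "V \<in> {V. openin (top_of_set K) V \<and> A \<subseteq> V}" for V
    using that bsets_openin by blast
  have "K \<in> {V. openin (top_of_set K) V \<and> A \<subseteq> V}" using bsets_sub[OF A] by auto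
  then have ne: "{V. openin (top_of_set K) V \<and> A \<subseteq> V} \<noteq> {}" by blast
  have bdd: "bdd_below ((\<lambda>V. tv K \<nu> V) ` {V. openin (top_of_set K) V \<and> A \<subseteq> V})"
    using VA tv_nonneg by (intro bdd_belowI[of _ 0]) auto
  have "(INF V \<in> {V. openin (top_of_set K) V \<and> A \<subseteq> V}. tv K \<nu> V) < tv K \<nu> A + e" using eq e by simp
  then obtain V where V: "openin (top_of_set K) V" "A \<subseteq> V" "tv K \<nu> V < tv K \<nu> A + e"
    using cINF_less_iff[OF ne bdd] by auto
  have "tv K \<nu> (V - A) = tv K \<nu> V - tv K \<nu> A" using tv_diff A VA V by auto
  then show ?thesis using V by (intro exI[of _ V]) auto
qed

end




lemma spair_scale: "spair K \<nu> (\<lambda>s. c * z s) = c * spair K \<nu> z"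
  unfolding spair_def by (simp add: right_diff_distrib)

lemma urysohn01_ex:
  fixes C U :: "real set"
  assumes "closed C" "open U" "C \<subseteq> U"
  shows "\<exists>f :: real \<Rightarrow> real. continuous_on UNIV f \<and> (\<forall>x. 0 \<le> f x \<and> f x \<le> 1) \<and>
    (\<forall>x\<in>C. f x = 1) \<and> (\<forall>x. x \<notin> U \<longrightarrow> f x = 0)"
proof -
  have cl: "closed (- U)" using assms(2) by auto
  have dj: "C \<inter> - U = {}" using assms(3) by auto
  show ?thesis
  proof (rule Urysohn[OF assms(1) cl dj, where a="1::real" and b=0])
    fix f :: "real \<Rightarrow> real"
    assume f: "continuous_on UNIV f" "\<And>x. f x \<in> closed_segment 1 0"
      "\<And>x. x \<in> C \<Longrightarrow> f x = 1" "\<And>x. x \<in> - U \<Longrightarrow> f x = 0"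
    have "0 \<le> f x \<and> f x \<le> 1" for x using f(2)[of x] by (auto simp: closed_segment_eq_real_ivl)
    then show ?thesis using f by (intro exI[of _ f]) auto
  qed
qed

lemma pointwise:
  fixes \<tau> T t :: real and x :: "real \<Rightarrow> real" and \<nu> :: "real set \<Rightarrow> real"
  assumes sm: "signed_measure_on {-\<tau>..T} \<nu>"
    and t: "0 \<le> t" "t \<le> T" and tau: "0 < \<tau>"
    and xc: "continuous_on {-\<tau>..T} x"
    and sd: "in_subdiff_max \<tau> T t x \<nu>"
  shows "sm_nonneg {-\<tau>..T} \<nu> \<and> tvnorm {-\<tau>..T} \<nu> = 1 \<and> supp_sm {-\<tau>..T} \<nu> \<subseteq> argmax_win \<tau> t x"
proof -
  define K where "K = {-\<tau>..T}"
  interpret sm_ctx K \<nu>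
    using sm unfolding signed_measure_on_def K_def by unfold_locales auto
  have reg: "regular_sm K \<nu>" using sm unfolding signed_measure_on_def K_def by auto
  define W where "W = {t-\<tau>..t}"
  have WK: "W \<subseteq> K" using t unfolding W_def K_def by auto
  have Wne: "W \<noteq> {}" using tau unfolding W_def by auto
  have xcK: "continuous_on K x" using xc unfolding K_def .
  define M where "M = Sup (x ` W)"
  have bddx: "bdd_above (x ` W)"
    using compact_continuous_image[OF continuous_on_subset[OF xcK WK]]
    by (intro bounded_imp_bdd_above compact_imp_bounded) (simp add: W_def)
  have xle: "\<And>s. s \<in> W \<Longrightarrow> x s \<le> M" unfolding M_def using bddx by (intro cSup_upper) auto
  have sdK: "\<And>w. continuous_on K w \<Longrightarrow> Sup (x ` W) + spair K \<nu> (\<lambda>s. w s - x s) \<le> Sup (w ` W)"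
    using sd unfolding in_subdiff_max_def K_def W_def by blast
  have supb: "spair K \<nu> (\<lambda>s. w s - x s) \<le> B - M"
    if w: "continuous_on K w" "\<And>s. s \<in> W \<Longrightarrow> w s \<le> B" for w B
  proof -
    have "Sup (w ` W) \<le> B" using Wne w(2) by (intro cSup_least) auto
    then show ?thesis using sdK[OF w(1)] unfolding M_def by linarith
  qed
  have Lpos: "0 \<le> spair K \<nu> z" if z: "continuous_on K z" "\<And>s. s \<in> K \<Longrightarrow> 0 \<le> z s" for z
  proof -
    have "spair K \<nu> (\<lambda>s. (x s - z s) - x s) \<le> M - M"
      using z xle WK by (intro supb continuous_intros xcK) force+
    moreover have "(\<lambda>s. (x s - z s) - x s) = (\<lambda>s. (-1) * z s)" by auto
    ultimately show ?thesis using spair_scale[of K \<nu> "-1" z] by simp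
  qed
  have nonneg: "0 \<le> \<nu> A" if A: "A \<in> bsets K" for A
  proof (rule ccontr)
    assume "\<not> 0 \<le> \<nu> A"
    define a where "a = - \<nu> A"
    have a: "0 < a" using \<open>\<not> 0 \<le> \<nu> A\<close> unfolding a_def by simp
    obtain C where C: "compact C" "C \<subseteq> A" "tv K \<nu> (A - C) < a / 4"
      using inner_reg[OF reg A, of "a/4"] a by auto
    have CK: "C \<in> bsets K" using C bsets_compact bsets_sub[OF A] by blast
    have "\<nu> C = \<nu> A - \<nu> (A - C)" using nu_diff[OF A CK C(2)] by simp
    moreover have "- \<nu> (A - C) \<le> tv K \<nu> (A - C)" using nu_le_tv bsets_Diff[OF A CK] by blast
    ultimately have nuC: "\<nu> C < - a + a / 4" using C(3) unfolding a_def by linarith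
    obtain V where V: "openin (top_of_set K) V" "C \<subseteq> V" "tv K \<nu> (V - C) < a / 4"
      using outer_reg[OF reg CK, of "a/4"] a by auto
    obtain U where U: "open U" "V = K \<inter> U" using V(1) openin_open by blast
    have CU: "C \<subseteq> U" using V(2) U(2) by blast
    obtain f :: "real \<Rightarrow> real" where f1: "continuous_on UNIV f" and f2: "\<forall>x. 0 \<le> f x \<and> f x \<le> 1"
      and f3: "\<forall>x\<in>C. f x = 1" and f4: "\<forall>x. x \<notin> U \<longrightarrow> f x = 0"
      using urysohn01_ex[OF compact_imp_closed[OF C(1)] U(1) CU] by blast
    have f: "continuous_on UNIV f" "\<And>x. 0 \<le> f x \<and> f x \<le> 1"
      "\<And>x. x \<in> C \<Longrightarrow> f x = 1" "\<And>x. x \<notin> U \<Longrightarrow> f x = 0"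
      using f1 f2 f3 f4 by auto
    have fK: "continuous_on K f" using f(1) continuous_on_subset by blast
    have "spair K \<nu> f \<le> \<nu> C + tv K \<nu> (V - C)"
      using f U by (intro spair_upper[OF fK _ CK bsets_openin[OF V(1)] V(2)]) auto
    moreover have "0 \<le> spair K \<nu> f" using f by (intro Lpos fK) auto
    ultimately show False using nuC V(3) a by linarith
  qed
  have tv_nu: "tv K \<nu> A = \<nu> A" if A: "A \<in> bsets K" for A
  proof -
    have "(\<Sum>B\<in>P. \<bar>\<nu> B\<bar>) = \<nu> A" if P: "P \<in> Parts A" for P
    proof -
      have P': "finite P" "P \<subseteq> bsets K" "disjoint P" "\<Union>P = A" using P unfolding Parts_def by auto
      have "(\<Sum>B\<in>P. \<bar>\<nu> B\<bar>) = (\<Sum>B\<in>P. \<nu> B)" using P'(2) nonneg by (intro sum.cong) auto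
      also have "\<dots> = \<nu> A" using nu_sum[OF P'(1-3)] P'(4) by simp
      finally show ?thesis .
    qed
    then have "tv K \<nu> A = (SUP P\<in>Parts A. \<nu> A)" unfolding tv_eq by (intro SUP_cong) auto
    also have "\<dots> = \<nu> A" using Parts_single[OF A] by (intro cSUP_const) auto
    finally show ?thesis .
  qed
  have L1: "spair K \<nu> (\<lambda>s. 1) = 1"
  proof -
    have "spair K \<nu> (\<lambda>s. (x s + 1) - x s) \<le> (M + 1) - M"
      using xle by (intro supb continuous_intros xcK) auto
    moreover have "spair K \<nu> (\<lambda>s. (x s - 1) - x s) \<le> (M - 1) - M"
      using xle by (intro supb continuous_intros xcK) auto
    moreover have "(\<lambda>s. (x s + 1) - x s) = (\<lambda>s. 1::real)" by auto
    moreover have "(\<lambda>s. (x s - 1) - x s) = (\<lambda>s. (-1) * 1::real)" by auto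
    ultimately show ?thesis using spair_scale[of K \<nu> "-1" "\<lambda>s. 1"] by simp
  qed
  have nuK: "\<nu> K = 1"
  proof -
    have c1: "continuous_on K (\<lambda>s. 1::real)" by (rule continuous_intros)
    have u: "spair K \<nu> (\<lambda>s. 1) \<le> \<nu> K + tv K \<nu> (K - K)"
      by (rule spair_upper[OF c1 _ bsets_top bsets_top]) auto
    have l: "(tv K \<nu> K + \<nu> K) / 2 - (tv K \<nu> K - \<nu> K) / 2 \<le> spair K \<nu> (\<lambda>s. 1)"
      by (rule spair_lower[OF c1 _ bsets_top bsets_top]) auto
    have e: "K - K = {}" by simp
    show ?thesis using u l L1 tv_empty unfolding e add_divide_distrib diff_divide_distrib by linarith
  qed
  have supp: "s \<in> argmax_win \<tau> t x" if s: "s \<in> supp_sm K \<nu>" for s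
  proof (rule ccontr)
    assume nargs: "s \<notin> argmax_win \<tau> t x"
    have sK: "s \<in> K" and snot: "\<And>V. openin (top_of_set K) V \<Longrightarrow> tv K \<nu> V = 0 \<Longrightarrow> s \<notin> V"
      using s unfolding supp_sm_def by auto
    obtain r \<eta> where r: "0 < r" "0 < \<eta>" and rb: "\<And>y. y \<in> W \<Longrightarrow> dist y s < r \<Longrightarrow> x y \<le> M - \<eta>"
    proof (cases "s \<in> W")
      case True
      then obtain s' where s': "s' \<in> W" "x s < x s'" using nargs unfolding argmax_win_def W_def by force
      have lt: "x s < M" using xle[OF s'(1)] s'(2) by linarith
      define \<eta> where "\<eta> = (M - x s) / 2"
      have eta: "0 < \<eta>" using lt unfolding \<eta>_def by simp
      have "\<forall>s0\<in>K. \<forall>e>0. \<exists>d>0. \<forall>y\<in>K. dist y s0 < d \<longrightarrow> dist (x y) (x s0) < e"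
        using xcK unfolding continuous_on_iff .
      then obtain d where d0: "0 < d" and d1: "\<forall>y\<in>K. dist y s < d \<longrightarrow> dist (x y) (x s) < \<eta>"
        using sK eta by blast
      have d: "0 < d" "\<And>y. y \<in> K \<Longrightarrow> dist y s < d \<Longrightarrow> dist (x y) (x s) < \<eta>"
        using d0 d1 by auto
      have "x y \<le> M - \<eta>" if "y \<in> W" "dist y s < d" for y
      proof -
        have yK: "y \<in> K" using that(1) WK by blast
        have "x y - x s < \<eta>" using d(2)[OF yK that(2)] unfolding dist_real_def by (simp add: abs_less_iff)
        then show ?thesis unfolding \<eta>_def diff_divide_distrib by linarith
      qed
      then show ?thesis using that d(1) eta by blast
    next
      case False
      have "open (- W)" unfolding W_def by auto
      then obtain e where e: "0 < e" "ball s e \<subseteq> - W" using False open_contains_ball by blast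
      have "False" if "y \<in> W" "dist y s < e" for y
        using e(2) that by (auto simp: dist_commute)
      then show ?thesis using that[of e 1] e(1) by fastforce
    qed
    define V where "V = K \<inter> ball s r"
    have Vo: "openin (top_of_set K) V" unfolding V_def by auto
    have VK: "V \<in> bsets K" using bsets_openin[OF Vo] .
    have "tv K \<nu> V = 0"
    proof -
      have eq: "tv K \<nu> V = (SUP C \<in> {C. compact C \<and> C \<subseteq> V}. tv K \<nu> C)"
        using reg VK unfolding regular_sm_def by blast
      have z: "tv K \<nu> C = 0" if C: "compact C" "C \<subseteq> V" for C
      proof -
        have CK: "C \<in> bsets K" using C bsets_compact V_def by blast
        have CU: "C \<subseteq> ball s r" using C(2) V_def by blast
        obtain f :: "real \<Rightarrow> real" where f1: "continuous_on UNIV f" and f2: "\<forall>x. 0 \<le> f x \<and> f x \<le> 1"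
          and f3: "\<forall>x\<in>C. f x = 1" and f4: "\<forall>x. x \<notin> ball s r \<longrightarrow> f x = 0"
          using urysohn01_ex[OF compact_imp_closed[OF C(1)] open_ball CU] by blast
        have f: "continuous_on UNIV f" "\<And>x. 0 \<le> f x \<and> f x \<le> 1"
          "\<And>x. x \<in> C \<Longrightarrow> f x = 1" "\<And>x. x \<notin> ball s r \<Longrightarrow> f x = 0"
          using f1 f2 f3 f4 by auto
        have fK: "continuous_on K f" using f(1) continuous_on_subset by blast
        have "spair K \<nu> (\<lambda>y. (x y + \<eta> * f y) - x y) \<le> M - M"
        proof (rule supb)
          show "continuous_on K (\<lambda>y. x y + \<eta> * f y)" by (intro continuous_intros xcK fK)
          fix y assume y: "y \<in> W"
          show "x y + \<eta> * f y \<le> M"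
          proof (cases "dist y s < r")
            case True
            have "\<eta> * f y \<le> \<eta> * 1" using f(2)[of y] r(2) by (intro mult_left_mono) auto
            then show ?thesis using rb[OF y True] by simp
          next
            case False
            then have "f y = 0" using f(4) by (simp add: dist_commute)
            then show ?thesis using xle[OF y] by simp
          qed
        qed
        moreover have "(\<lambda>y. (x y + \<eta> * f y) - x y) = (\<lambda>y. \<eta> * f y)" by auto
        ultimately have "\<eta> * spair K \<nu> f \<le> 0" using spair_scale[of K \<nu> \<eta> f] by simp
        then have sp: "spair K \<nu> f \<le> 0" using r(2) by (simp add: mult_le_0_iff)
        have "(tv K \<nu> C + \<nu> C) / 2 - (tv K \<nu> V - \<nu> V) / 2 \<le> spair K \<nu> f"
          using f V_def by (intro spair_lower[OF fK _ CK VK C(2)]) auto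
        then have "\<nu> C \<le> 0" using sp tv_nu[OF CK] tv_nu[OF VK]
          unfolding add_divide_distrib diff_divide_distrib by linarith
        then show ?thesis using tv_nu[OF CK] nonneg[OF CK] by simp
      qed
      have "tv K \<nu> V = (SUP C \<in> {C. compact C \<and> C \<subseteq> V}. 0)" unfolding eq using z by (intro SUP_cong) auto
      also have "\<dots> = 0" by (rule cSUP_const) auto
      finally show ?thesis .
    qed
    moreover have "s \<in> V" using sK r(1) unfolding V_def by auto
    ultimately show False using snot[OF Vo] by blast
  qed
  show ?thesis
    unfolding K_def[symmetric] sm_nonneg_def tvnorm_def
    using nonneg tv_nu[OF bsets_top] nuK supp by auto
qed




theorem corollary6p4:
  fixes \<tau> T \<delta> :: real
    and F0 :: "real^'n \<Rightarrow> real^'n \<Rightarrow> real^'n"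
    and F1 :: "real^'n \<Rightarrow> real^'n \<Rightarrow> real^'m^'n"
    and \<phi> :: "real \<Rightarrow> real^'n" and U :: "(real^'m) set"
    and j :: "real \<Rightarrow> real^'n \<Rightarrow> real^'m \<Rightarrow> real"
    and xs :: "real \<Rightarrow> real^'n" and us :: "real \<Rightarrow> real^'m"
    and xk :: "nat \<Rightarrow> real \<Rightarrow> real^'n" and uk :: "nat \<Rightarrow> real \<Rightarrow> real^'m"
    and \<mu> :: "real \<Rightarrow> 'n \<Rightarrow> real set \<Rightarrow> real"
  assumes "standing_assms \<tau> T F0 F1 \<phi> U j"
    and "0 < \<delta>"
    and "local_solution_P \<tau> T F0 F1 \<phi> U j \<delta> xs us"
    and "\<And>k. 1 \<le> k \<Longrightarrow> global_solution_Pk k \<tau> T F0 F1 \<phi> U j \<delta> us (xk k) (uk k)"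
    and "Linf_w \<tau> T \<mu>"
    and "\<exists>r. strict_mono r \<and> (\<forall>l. 1 \<le> r l) \<and>
           (\<forall>Z :: 'n \<Rightarrow> real \<Rightarrow> real \<Rightarrow> real. (\<forall>i. L1C \<tau> T (Z i)) \<longrightarrow>
              (\<lambda>l. \<Sum>i\<in>UNIV. \<integral>t. spair {-\<tau>..T} (muk \<tau> (r l) (xk (r l)) t i) (Z i t) \<partial>lebesgue_on {0..T})
              \<longlonglongrightarrow> (\<Sum>i\<in>UNIV. \<integral>t. spair {-\<tau>..T} (\<mu> t i) (Z i t) \<partial>lebesgue_on {0..T}))"
    and "AE t in lebesgue_on {0..T}. \<forall>i. in_subdiff_max \<tau> T t (\<lambda>s. xs s $ i) (\<mu> t i)"
  shows "AE t in lebesgue_on {0..T}. \<forall>i.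
           sm_nonneg {-\<tau>..T} (\<mu> t i) \<and> tvnorm {-\<tau>..T} (\<mu> t i) = 1 \<and>
           supp_sm {-\<tau>..T} (\<mu> t i) \<subseteq> argmax_win \<tau> t (\<lambda>s. xs s $ i)"
proof -
  have tau: "0 < \<tau>" using assms(1) unfolding standing_assms_def by blast
  have xc: "continuous_on {-\<tau>..T} xs"
    using assms(3) unfolding local_solution_P_def is_state_def by blast
  have xci: "continuous_on {-\<tau>..T} (\<lambda>s. xs s $ i)" for i
    using xc by (rule continuous_on_component)
  have smt: "\<And>t i. t \<in> {0..T} \<Longrightarrow> signed_measure_on {-\<tau>..T} (\<mu> t i)"
    using assms(5) unfolding Linf_w_def by blast
  have AEsp: "AE t in lebesgue_on {0..T}. t \<in> {0..T}"
    by (rule AE_I2) simp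
  show ?thesis
    using assms(7) AEsp
  proof eventually_elim
    case (elim t)
    show ?case
    proof
      fix i
      show "sm_nonneg {-\<tau>..T} (\<mu> t i) \<and> tvnorm {-\<tau>..T} (\<mu> t i) = 1 \<and>
           supp_sm {-\<tau>..T} (\<mu> t i) \<subseteq> argmax_win \<tau> t (\<lambda>s. xs s $ i)"
        using elim by (intro pointwise smt xci tau) auto
    qed
  qed
qed


end
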